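(* Let $\tau\ge1$. If Weighted Majority Rule 1 selects $P$ over $Q$, then $SC(P)\le SC(Q)+2\,SC(Z)$ for every point $Z$ of the metric space.
   Context: Voters $N=\{1,\dots,n\}$ and candidates are points of an arbitrary metric space $(X,d)$. Voter $i$ prefers $P$ to $Q$ only if $d(i,P)\le d(i,Q)$, with preference strength $\alpha_i^{PQ}=d(i,Q)/d(i,P)\ge1$. $SC(Y)=\sum_{i\in N}d(i,Y)$ for any $Y\in X$. For candidates $P,Q$ and threshold $\tau$, let $A_2$ ($A_1$) be the voters preferring $P$ with strength $>\tau$ ($\le\tau$), and $B_2$ ($B_1$) those preferring $Q$ with strength $>\tau$ ($\le\tau$). Weighted Majority Rule 1: if $\tau\ge\sqrt2+1$, weight $\frac{\tau+1}{\tau-1}$ for strength $>\tau$ and weight $1$ for strength $\le\tau$; if $\tau<\sqrt2+1$, weight $\tau$ for strength $>\tau$ and weight $1$ for strength $\le\tau$. It selects $P$ over $Q$ when the total weight of voters preferring $P$ is at least that of voters preferring $Q$. *)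

theory Defs
  imports Complex_Main "HOL-Library.Extended_Real"
begin

text \<open>Points of an arbitrary metric space are elements of a type of class metric_space,
  with d = dist. Voters are indexed by {1..n}; voter i sits at location loc i.\<close>

definition SC :: "nat \<Rightarrow> (nat \<Rightarrow> 'a::metric_space) \<Rightarrow> 'a \<Rightarrow> real" where
  "SC n loc Y = (\<Sum>i\<in>{1..n}. dist (loc i) Y)"

definition strength :: "'a::metric_space \<Rightarrow> 'a \<Rightarrow> 'a \<Rightarrow> ereal" where
  "strength x A B =
     (if dist x A = 0 then (if dist x B = 0 then 1 else \<infinity>)
      else ereal (dist x B / dist x A))"

definition wmr1_strong_weight :: "real \<Rightarrow> real" where
  "wmr1_strong_weight \<tau> = (if \<tau> \<ge> sqrt 2 + 1 then (\<tau> + 1) / (\<tau> - 1) else \<tau>)"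

definition wmr1_weight :: "real \<Rightarrow> 'a::metric_space \<Rightarrow> 'a \<Rightarrow> 'a \<Rightarrow> real" where
  "wmr1_weight \<tau> x A B = (if strength x A B > ereal \<tau> then wmr1_strong_weight \<tau> else 1)"

text \<open>Preference profile: prefP i means voter i prefers P (otherwise Q);
  consistency with the metric.\<close>
definition consistent_profile ::
  "nat \<Rightarrow> (nat \<Rightarrow> 'a::metric_space) \<Rightarrow> (nat \<Rightarrow> bool) \<Rightarrow> 'a \<Rightarrow> 'a \<Rightarrow> bool" where
  "consistent_profile n loc prefP P Q \<longleftrightarrow>
     (\<forall>i\<in>{1..n}. (prefP i \<longrightarrow> dist (loc i) P \<le> dist (loc i) Q) \<and>
                  (\<not> prefP i \<longrightarrow> dist (loc i) Q \<le> dist (loc i) P))"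

definition wmr1_selects ::
  "real \<Rightarrow> nat \<Rightarrow> (nat \<Rightarrow> 'a::metric_space) \<Rightarrow> (nat \<Rightarrow> bool) \<Rightarrow> 'a \<Rightarrow> 'a \<Rightarrow> bool" where
  "wmr1_selects \<tau> n loc prefP P Q \<longleftrightarrow>
     (\<Sum>i\<in>{i\<in>{1..n}. \<not> prefP i}. wmr1_weight \<tau> (loc i) Q P)
       \<le> (\<Sum>i\<in>{i\<in>{1..n}. prefP i}. wmr1_weight \<tau> (loc i) P Q)"

end

theory Submission
  imports Defs
begin

lemma W_ge1: assumes "\<tau> \<ge> 1" shows "wmr1_strong_weight \<tau> \<ge> 1"
proof (cases "\<tau> \<ge> sqrt 2 + 1")
  case True
  have "sqrt 2 > 0" by simp
  hence t: "\<tau> - 1 > 0" using True by linarith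
  have "1 \<le> (\<tau> + 1)/(\<tau> - 1)" using t by (simp add: field_simps)
  then show ?thesis using True by (simp add: wmr1_strong_weight_def)
next
  case False
  then show ?thesis using assms by (simp add: wmr1_strong_weight_def)
qed

lemma W_bound:
  assumes "\<tau> \<ge> 1"
  shows "wmr1_strong_weight \<tau> * (1 - 1/\<tau>) \<le> min 2 (\<tau> - 1)"
proof (cases "\<tau> \<ge> sqrt 2 + 1")
  case True
  have s: "sqrt 2 \<ge> 1" by simp
  have t1: "\<tau> - 1 \<ge> sqrt 2" using True by simp
  hence "(\<tau> - 1)^2 \<ge> (sqrt 2)^2" using s by (intro power_mono) auto
  hence q: "(\<tau> - 1)^2 \<ge> 2" by simp
  have tg: "\<tau> > 1" using True s by linarith
  have "wmr1_strong_weight \<tau> * (1 - 1/\<tau>) = (\<tau> + 1)/\<tau>"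
    using True tg by (simp add: wmr1_strong_weight_def field_simps)
  moreover have "(\<tau> + 1)/\<tau> \<le> 2" using assms by (simp add: field_simps)
  moreover have "(\<tau> + 1)/\<tau> \<le> \<tau> - 1" using assms q
    by (simp add: field_simps power2_eq_square)
  ultimately show ?thesis by simp
next
  case False
  have "sqrt 2 < sqrt (2^2)" by (simp only: real_sqrt_less_iff) simp
  hence "sqrt 2 < 2" by simp
  hence "\<tau> < 3" using False by simp
  moreover have "wmr1_strong_weight \<tau> * (1 - 1/\<tau>) = \<tau> - 1"
    using False assms by (simp add: wmr1_strong_weight_def field_simps)
  ultimately show ?thesis by simp
qed

lemma weak_le:
  assumes "\<not> strength x A B > ereal \<tau>" "\<tau> \<ge> 1"
  shows "dist x B \<le> \<tau> * dist x A"
proof (cases "dist x A = 0")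
  case True
  then show ?thesis using assms by (auto simp: strength_def split: if_splits)
next
  case False
  hence pos: "dist x A > 0" by simp
  have "dist x B / dist x A \<le> \<tau>" using assms False by (simp add: strength_def)
  then show ?thesis using pos by (simp add: field_simps)
qed

lemma strong_ge:
  assumes "strength x A B > ereal \<tau>" "\<tau> \<ge> 1"
  shows "dist x B \<ge> \<tau> * dist x A"
proof (cases "dist x A = 0")
  case True
  then show ?thesis by simp
next
  case False
  hence pos: "dist x A > 0" by simp
  have "dist x B / dist x A > \<tau>" using assms False by (simp add: strength_def)
  then show ?thesis using pos by (simp add: field_simps)
qed

theorem mainTheorem5:
  fixes \<tau> :: real and n :: nat and loc :: "nat \<Rightarrow> 'a::metric_space"
    and prefP :: "nat \<Rightarrow> bool" and P Q :: 'a
  assumes "\<tau> \<ge> 1"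
    and "consistent_profile n loc prefP P Q"
    and "wmr1_selects \<tau> n loc prefP P Q"
  shows "\<forall>Z. SC n loc P \<le> SC n loc Q + 2 * SC n loc Z"
proof
  fix Z
  define W where "W = wmr1_strong_weight \<tau>"
  have W1: "W \<ge> 1" using W_ge1[OF assms(1)] W_def by simp
  have Wb: "W * (1 - 1/\<tau>) \<le> min 2 (\<tau> - 1)" using W_bound[OF assms(1)] W_def by simp
  define p where "p = dist Z P"
  define q where "q = dist Z Q"
  define c where "c = max 0 (max (min (p - q) ((1 - 1/\<tau>) * p)) ((p - q)/W))"
  define f where "f i = dist (loc i) P - dist (loc i) Q - 2 * dist (loc i) Z" for i
  let ?I = "{1..n}"
  let ?A = "{i\<in>?I. prefP i}"
  let ?B = "{i\<in>?I. \<not> prefP i}"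
  have c0: "c \<ge> 0" unfolding c_def by simp
  have p0: "p \<ge> 0" unfolding p_def by simp
  have tpos: "\<tau> > 0" using assms(1) by simp
  have k0: "1 - 1/\<tau> \<ge> 0" using assms(1) by (simp add: field_simps)
  have Bf: "f i \<le> c * wmr1_weight \<tau> (loc i) Q P" if "i \<in> ?B" for i
  proof -
    let ?a = "dist (loc i) P" and ?b = "dist (loc i) Q" and ?z = "dist (loc i) Z"
    have ba: "?b \<le> ?a" using assms(2) that by (auto simp: consistent_profile_def)
    have t1: "?a \<le> ?z + p" unfolding p_def
      by (metis dist_commute dist_triangle)
    have t2: "q \<le> ?z + ?b" unfolding q_def
      by (metis dist_commute dist_triangle)
    have fd: "f i \<le> p - q" unfolding f_def using t1 t2 by simp
    show ?thesis
    proof (cases "strength (loc i) Q P > ereal \<tau>")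
      case True
      have "p - q \<le> W * c"
      proof (cases "p - q \<le> 0")
        case True then show ?thesis using c0 W1 by (smt (verit) mult_nonneg_nonneg)
      next
        case False
        have "(p - q)/W \<le> c" unfolding c_def by simp
        then show ?thesis using W1 by (simp add: field_simps)
      qed
      then show ?thesis using True fd W_def by (simp add: wmr1_weight_def mult.commute)
    next
      case False
      have wk: "?a \<le> \<tau> * ?b" using weak_le[OF False assms(1)] .
      have "?a / \<tau> \<le> ?b" using wk tpos by (simp add: field_simps)
      hence "?a - ?b \<le> (1 - 1/\<tau>) * ?a" by (simp add: algebra_simps)
      also have "\<dots> \<le> (1 - 1/\<tau>) * (?z + p)" using t1 k0 by (intro mult_left_mono) auto
      finally have h1: "?a - ?b \<le> (1 - 1/\<tau>) * ?z + (1 - 1/\<tau>) * p"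
        by (simp add: distrib_left)
      have "1/\<tau> > 0" using tpos by simp
      hence "1 - 1/\<tau> \<le> 2" by linarith
      hence "(1 - 1/\<tau>) * ?z \<le> 2 * ?z" by (intro mult_right_mono) auto
      hence "f i \<le> (1 - 1/\<tau>) * p" unfolding f_def using h1 by linarith
      hence "f i \<le> min (p - q) ((1 - 1/\<tau>) * p)" using fd by simp
      also have "\<dots> \<le> c" unfolding c_def by simp
      finally show ?thesis using False by (simp add: wmr1_weight_def)
    qed
  qed
  have Af: "c * wmr1_weight \<tau> (loc i) P Q \<le> - f i" if "i \<in> ?A" for i
  proof -
    let ?a = "dist (loc i) P" and ?b = "dist (loc i) Q" and ?z = "dist (loc i) Z"
    have ab: "?a \<le> ?b" using assms(2) that by (auto simp: consistent_profile_def)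
    have t1: "p \<le> ?z + ?a" unfolding p_def
      by (metis dist_commute dist_triangle)
    have t2: "?b \<le> ?z + q" unfolding q_def
      by (metis dist_commute dist_triangle)
    have s1: "p - q \<le> - f i" unfolding f_def using t1 t2 ab by simp
    have s0: "0 \<le> - f i" unfolding f_def using ab zero_le_dist[of "loc i" Z] by linarith
    have dW: "(p - q)/W \<le> max 0 (p - q)"
    proof (cases "p - q \<ge> 0")
      case True
      hence "(p - q)/W \<le> p - q" using W1 by (simp add: divide_le_eq mult_le_cancel_left1)
      then show ?thesis by simp
    next
      case False
      hence "(p - q)/W \<le> 0" using W1 by (simp add: divide_le_0_iff)
      then show ?thesis by simp
    qed
    have cle: "c \<le> max 0 (p - q)" unfolding c_def using dW by simp
    show ?thesis
    proof (cases "strength (loc i) P Q > ereal \<tau>")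
      case True
      have st: "?b \<ge> \<tau> * ?a" using strong_ge[OF True assms(1)] .
      have "- f i \<ge> 2 * ?z + (\<tau> - 1) * ?a" unfolding f_def using st
        by (simp add: algebra_simps)
      moreover have "2 * ?z + (\<tau> - 1) * ?a \<ge> min 2 (\<tau> - 1) * (?z + ?a)"
        using assms(1) by (simp add: min_def distrib_left mult_right_mono)
      moreover have "min 2 (\<tau> - 1) * (?z + ?a) \<ge> min 2 (\<tau> - 1) * p"
        using t1 assms(1) by (intro mult_left_mono) auto
      ultimately have m: "- f i \<ge> W * ((1 - 1/\<tau>) * p)"
        using Wb p0 by (smt (verit) mult_right_mono mult.assoc)
      have "W * c \<le> - f i"
      proof -
        consider "c = 0" | "c = min (p - q) ((1 - 1/\<tau>) * p)" | "c = (p - q)/W"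
          unfolding c_def by (metis max_def)
        then show ?thesis
        proof cases
          case 1 then show ?thesis using s0 by simp
        next
          case 2
          hence "c \<le> (1 - 1/\<tau>) * p" by simp
          hence "W * c \<le> W * ((1 - 1/\<tau>) * p)" using W1 by (intro mult_left_mono) auto
          then show ?thesis using m by simp
        next
          case 3 then show ?thesis using W1 s1 by simp
        qed
      qed
      then show ?thesis using True W_def by (simp add: wmr1_weight_def mult.commute)
    next
      case False
      then show ?thesis using cle s0 s1 by (simp add: wmr1_weight_def)
    qed
  qed
  have fin: "finite ?I" by simp
  have "SC n loc P - SC n loc Q - 2 * SC n loc Z = (\<Sum>i\<in>?I. f i)"
    unfolding SC_def f_def by (simp add: sum_subtractf sum_distrib_left)
  also have "\<dots> = (\<Sum>i\<in>?B. f i) + (\<Sum>i\<in>?A. f i)"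
  proof -
    have "(\<Sum>i\<in>?I. f i) = (\<Sum>i\<in>?I. (if \<not> prefP i then f i else 0) + (if prefP i then f i else 0))"
      by (intro sum.cong) auto
    also have "\<dots> = (\<Sum>i\<in>?B. f i) + (\<Sum>i\<in>?A. f i)"
      by (simp only: sum.distrib sum.inter_filter[OF fin])
    finally show ?thesis .
  qed
  also have "\<dots> \<le> (\<Sum>i\<in>?B. c * wmr1_weight \<tau> (loc i) Q P) - (\<Sum>i\<in>?A. c * wmr1_weight \<tau> (loc i) P Q)"
  proof -
    have "(\<Sum>i\<in>?B. f i) \<le> (\<Sum>i\<in>?B. c * wmr1_weight \<tau> (loc i) Q P)"
      by (intro sum_mono Bf)
    moreover have "(\<Sum>i\<in>?A. c * wmr1_weight \<tau> (loc i) P Q) \<le> (\<Sum>i\<in>?A. - f i)"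
      by (intro sum_mono Af)
    ultimately show ?thesis by (simp add: sum_negf)
  qed
  also have "\<dots> = c * ((\<Sum>i\<in>?B. wmr1_weight \<tau> (loc i) Q P) - (\<Sum>i\<in>?A. wmr1_weight \<tau> (loc i) P Q))"
    by (simp add: sum_distrib_left right_diff_distrib)
  also have "\<dots> \<le> 0"
    using assms(3) c0 by (simp add: wmr1_selects_def mult_nonneg_nonpos)
  finally show "SC n loc P \<le> SC n loc Q + 2 * SC n loc Z" by simp
qed

end
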